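(* For every integer $t\ge 2$, Waiter wins the $(1:1)$ Client-Waiter vertex $K_3$-game played on the graph $DD_t$.
   Context: For $t\ge 2$, $DD_t$ is the graph obtained as follows: take triangles $a_ib_ic_i$ for $i=1,\dots,t$ on vertices where $c_i=a_{i+1}$ for $1\le i<t$ and all other listed vertices are distinct (a chain of $t$ triangles, consecutive ones sharing exactly one vertex, nonconsecutive ones disjoint), and add two new vertices $x,y$ together with the triangles $a_1c_1y$ and $a_tc_tx$ (i.e., edges $ya_1,yc_1,xa_t,xc_t$). The $(1:1)$ Client-Waiter vertex $K_3$-game on a graph: in each round Waiter offers one or two unclaimed vertices, Client claims one and Waiter the other (if any); Client wins if the subgraph induced by his vertices contains a triangle, otherwise Waiter wins. *)

theory Defs
  imports Main
begin

definition has_triangle :: "('a \<Rightarrow> 'a \<Rightarrow> bool) \<Rightarrow> 'a set \<Rightarrow> bool" where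
  "has_triangle E S \<longleftrightarrow>
     (\<exists>a\<in>S. \<exists>b\<in>S. \<exists>c\<in>S. a \<noteq> b \<and> b \<noteq> c \<and> a \<noteq> c \<and> E a b \<and> E b c \<and> E a c)"

text \<open>waiter_wins E C U: in the position where Client has claimed the set C and
  U is the set of still unclaimed vertices, Waiter has a strategy guaranteeing that
  the subgraph induced by Client's vertices at the end of the game contains no
  triangle. In each round Waiter offers one or two unclaimed vertices; Client picks
  one of them, and Waiter gets the other one (if any). Waiter's own vertices play no role for the winning condition.\<close>

inductive waiter_wins :: "('a \<Rightarrow> 'a \<Rightarrow> bool) \<Rightarrow> 'a set \<Rightarrow> 'a set \<Rightarrow> bool"
  for E :: "'a \<Rightarrow> 'a \<Rightarrow> bool" where
  finish: "\<not> has_triangle E C \<Longrightarrow> waiter_wins E C {}"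
| offer_one: "v \<in> U \<Longrightarrow> waiter_wins E (insert v C) (U - {v}) \<Longrightarrow> waiter_wins E C U"
| offer_two: "v \<in> U \<Longrightarrow> w \<in> U \<Longrightarrow> v \<noteq> w
     \<Longrightarrow> waiter_wins E (insert v C) (U - {v, w})
     \<Longrightarrow> waiter_wins E (insert w C) (U - {v, w})
     \<Longrightarrow> waiter_wins E C U"

definition waiter_wins_game :: "'a set \<Rightarrow> ('a \<Rightarrow> 'a \<Rightarrow> bool) \<Rightarrow> bool" where
  "waiter_wins_game V E \<longleftrightarrow> waiter_wins E {} V"

text \<open>Vertices: Ch i for i = 0..t is the chain vertex with a_i = Ch (i-1), c_i = Ch i
  (so c_i = a_(i+1)); Tp i for i = 1..t is b_i; X and Y are the two extra vertices.\<close>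

datatype ddv = Ch nat | Tp nat | X | Y

definition DD_verts :: "nat \<Rightarrow> ddv set" where
  "DD_verts t = Ch ` {0..t} \<union> Tp ` {1..t} \<union> {X, Y}"

definition DD_edge0 :: "nat \<Rightarrow> ddv \<Rightarrow> ddv \<Rightarrow> bool" where
  "DD_edge0 t u v \<longleftrightarrow>
     (\<exists>i\<in>{1..t}. (u = Ch (i - 1) \<and> v = Tp i) \<or> (u = Tp i \<and> v = Ch i)
                  \<or> (u = Ch (i - 1) \<and> v = Ch i))
     \<or> (u = Y \<and> v = Ch 0) \<or> (u = Y \<and> v = Ch 1)
     \<or> (u = X \<and> v = Ch (t - 1)) \<or> (u = X \<and> v = Ch t)"

definition DD_edge :: "nat \<Rightarrow> ddv \<Rightarrow> ddv \<Rightarrow> bool" where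
  "DD_edge t u v \<longleftrightarrow> DD_edge0 t u v \<or> DD_edge0 t v u"

end

theory Submission
  imports Defs
begin

definition pset :: "('a \<times> 'a) list \<Rightarrow> 'a set" where
  "pset ps = {x. \<exists>(a,b)\<in>set ps. x = a \<or> x = b}"

fun pdist :: "('a \<times> 'a) list \<Rightarrow> bool" where
  "pdist [] = True"
| "pdist ((a,b)#ps) = (a \<noteq> b \<and> a \<notin> pset ps \<and> b \<notin> pset ps \<and> pdist ps)"

lemma pset_Nil[simp]: "pset [] = {}" by (simp add: pset_def)
lemma pset_Cons[simp]: "pset ((a,b)#ps) = insert a (insert b (pset ps))"
  by (auto simp: pset_def)

lemma pair_strategy:
  assumes "pdist ps"
    and "\<forall>S. S \<subseteq> pset ps \<and> (\<forall>(a,b)\<in>set ps. a\<in>S \<longleftrightarrow> b\<notin>S) \<longrightarrow> \<not> has_triangle E (C \<union> S)"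
  shows "waiter_wins E C (pset ps)"
  using assms
proof (induction ps arbitrary: C)
  case Nil
  then show ?case using waiter_wins.finish[of E C] by (metis pset_Nil empty_subsetI empty_iff sup_bot_right list.set(1))
next
  case (Cons p ps)
  obtain a b where p: "p = (a,b)" by (cases p)
  have d: "a \<noteq> b" "a \<notin> pset ps" "b \<notin> pset ps" "pdist ps" using Cons.prems(1) p by auto
  have eq: "pset (p#ps) - {a,b} = pset ps" using d p by auto
  have A: "waiter_wins E (insert a C) (pset ps)"
  proof (rule Cons.IH[OF d(4)], intro allI impI)
    fix S assume S: "S \<subseteq> pset ps \<and> (\<forall>(c,d)\<in>set ps. c\<in>S \<longleftrightarrow> d\<notin>S)"
    have "insert a S \<subseteq> pset (p#ps) \<and> (\<forall>(c,d)\<in>set (p#ps). c\<in>insert a S \<longleftrightarrow> d\<notin>insert a S)"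
      using S d p by (fastforce simp: pset_def)
    then have "\<not> has_triangle E (C \<union> insert a S)" using Cons.prems(2) by blast
    then show "\<not> has_triangle E (insert a C \<union> S)" by simp
  qed
  have B: "waiter_wins E (insert b C) (pset ps)"
  proof (rule Cons.IH[OF d(4)], intro allI impI)
    fix S assume S: "S \<subseteq> pset ps \<and> (\<forall>(c,d)\<in>set ps. c\<in>S \<longleftrightarrow> d\<notin>S)"
    have "insert b S \<subseteq> pset (p#ps) \<and> (\<forall>(c,d)\<in>set (p#ps). c\<in>insert b S \<longleftrightarrow> d\<notin>insert b S)"
      using S d p by (fastforce simp: pset_def)
    then have "\<not> has_triangle E (C \<union> insert b S)" using Cons.prems(2) by blast
    then show "\<not> has_triangle E (insert b C \<union> S)" by simp
  qed
  show ?case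
    apply (rule waiter_wins.offer_two[of a _ b])
    using d p A B eq by auto
qed


lemma DD_sym: "DD_edge t u v = DD_edge t v u"
  by (auto simp: DD_edge_def)

definition isCh :: "ddv \<Rightarrow> bool" where "isCh u \<longleftrightarrow> (\<exists>i. u = Ch i)"

lemma L1: "DD_edge t u v \<Longrightarrow> \<not> isCh u \<Longrightarrow> isCh v"
  by (auto simp: DD_edge_def DD_edge0_def isCh_def)

lemma L2: "DD_edge t (Ch i) (Ch j) \<Longrightarrow> (j = Suc i \<and> j \<le> t) \<or> (i = Suc j \<and> i \<le> t)"
  by (auto simp: DD_edge_def DD_edge0_def)

lemma L3: "DD_edge t (Ch i) z \<Longrightarrow> DD_edge t (Ch (Suc i)) z \<Longrightarrow> Suc i \<le> t \<Longrightarrow> 2 \<le> t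
   \<Longrightarrow> z = Tp (Suc i) \<or> (z = Y \<and> i = 0) \<or> (z = X \<and> Suc i = t)"
proof (cases z)
  case (Ch k)
  assume "DD_edge t (Ch i) z" "DD_edge t (Ch (Suc i)) z"
  then show ?thesis using L2[of t i k] L2[of t "Suc i" k] Ch by auto
qed (auto simp: DD_edge_def DD_edge0_def)

lemma core: "DD_edge t (Ch i) (Ch j) \<Longrightarrow> DD_edge t (Ch i) z \<Longrightarrow> DD_edge t (Ch j) z \<Longrightarrow> 2 \<le> t
  \<Longrightarrow> Ch i \<in> K \<Longrightarrow> Ch j \<in> K \<Longrightarrow> z \<in> K
  \<Longrightarrow> \<exists>k\<in>{1..t}. Ch (k-1)\<in>K \<and> Ch k\<in>K \<and> (Tp k\<in>K \<or> (k=1 \<and> Y\<in>K) \<or> (k=t \<and> X\<in>K))"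
proof -
  assume a: "DD_edge t (Ch i) (Ch j)" "DD_edge t (Ch i) z" "DD_edge t (Ch j) z" "2 \<le> t"
    "Ch i \<in> K" "Ch j \<in> K" "z \<in> K"
  from L2[OF a(1)] show ?thesis
  proof
    assume h: "j = Suc i \<and> j \<le> t"
    with L3[of t i z] a show ?thesis by (rule_tac x=j in bexI) auto
  next
    assume h: "i = Suc j \<and> i \<le> t"
    with L3[of t j z] a show ?thesis by (rule_tac x=i in bexI) auto
  qed
qed

lemma tri: "has_triangle (DD_edge t) K \<Longrightarrow> 2 \<le> t
  \<Longrightarrow> \<exists>k\<in>{1..t}. Ch (k-1)\<in>K \<and> Ch k\<in>K \<and> (Tp k\<in>K \<or> (k=1 \<and> Y\<in>K) \<or> (k=t \<and> X\<in>K))"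
proof -
  assume h: "has_triangle (DD_edge t) K" "2 \<le> t"
  then obtain a b c where abc: "a\<in>K" "b\<in>K" "c\<in>K" "DD_edge t a b" "DD_edge t b c" "DD_edge t a c"
    unfolding has_triangle_def by blast
  have s: "DD_edge t b a" "DD_edge t c b" "DD_edge t c a" using abc DD_sym by blast+
  show ?thesis
  proof (cases "isCh a")
    case True
    then obtain i where i: "a = Ch i" by (auto simp: isCh_def)
    show ?thesis
    proof (cases "isCh b")
      case True
      then obtain j where "b = Ch j" by (auto simp: isCh_def)
      then show ?thesis using core[of t i j c K] i abc s h by auto
    next
      case False
      then have "isCh c" using L1 s by blast
      then obtain j where "c = Ch j" by (auto simp: isCh_def)
      then show ?thesis using core[of t i j b K] i abc s h by auto
    qed
  next
    case False
    then have "isCh b" "isCh c" using L1 abc by blast+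
    then obtain i j where "b = Ch i" "c = Ch j" by (auto simp: isCh_def)
    then show ?thesis using core[of t i j a K] abc s h by auto
  qed
qed


lemma pset_map: "pset (map (\<lambda>i. (f i, g i)) xs) = f ` set xs \<union> g ` set xs"
  by (auto simp: pset_def)

lemma pdist_map: "distinct xs \<Longrightarrow> inj_on h (set xs) \<Longrightarrow> pdist (map (\<lambda>i. (Tp i, Ch (h i))) xs)"
  by (induction xs) (auto simp: pset_map)

lemma set1: "2 \<le> t \<Longrightarrow> Ch ` {0..t} \<union> Tp ` {1..t} - {Tp 1} = {Ch 0, Ch 1} \<union> (Tp ` {2..<Suc t} \<union> Ch ` {2..<Suc t})"
  by (auto simp: image_iff)

lemma case1:
  assumes t: "2 \<le> t"
  shows "waiter_wins (DD_edge t) {Y} (DD_verts t - {X, Y})"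
proof -
  define ps where "ps = (Ch 0, Ch 1) # map (\<lambda>i. (Tp i, Ch (id i))) [2..<Suc t]"
  have pd: "pdist ps" unfolding ps_def using pdist_map[of "[2..<Suc t]" id]
    by (auto simp: pset_map)
  have pe: "pset ps = DD_verts t - {X, Y} - {Tp 1}"
  proof -
    have a: "DD_verts t - {X,Y} - {Tp 1} = Ch ` {0..t} \<union> Tp ` {1..t} - {Tp 1}" by (auto simp: DD_verts_def)
    have b: "Ch ` {0..t} \<union> Tp ` {1..t} - {Tp 1} = {Ch 0, Ch 1} \<union> (Tp ` {2..<Suc t} \<union> Ch ` {2..<Suc t})"
      using t by (auto simp: image_iff)
    show ?thesis unfolding a b ps_def by (auto simp: pset_map)
  qed
  have "waiter_wins (DD_edge t) (insert (Tp 1) {Y}) (pset ps)"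
  proof (rule pair_strategy[OF pd], intro allI impI notI)
    fix S assume S: "S \<subseteq> pset ps \<and> (\<forall>(a,b)\<in>set ps. a\<in>S \<longleftrightarrow> b\<notin>S)"
      and h: "has_triangle (DD_edge t) (insert (Tp 1) {Y} \<union> S)"
    have XS: "X \<notin> S" using S pe by auto
    have c0: "Ch 0 \<in> S \<longleftrightarrow> Ch 1 \<notin> S" using S unfolding ps_def by auto
    have ck: "\<And>k. 2 \<le> k \<Longrightarrow> k \<le> t \<Longrightarrow> Tp k \<in> S \<longleftrightarrow> Ch k \<notin> S"
    proof -
      fix k assume "2 \<le> k" "k \<le> t"
      then have "(Tp k, Ch k) \<in> set ps" unfolding ps_def by auto
      then show "Tp k \<in> S \<longleftrightarrow> Ch k \<notin> S" using S by auto
    qed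
    from tri[OF h t] obtain k where k: "k\<in>{1..t}" "Ch (k-1) \<in> insert (Tp 1) {Y} \<union> S"
      "Ch k \<in> insert (Tp 1) {Y} \<union> S"
      "Tp k \<in> insert (Tp 1) {Y} \<union> S \<or> (k=1 \<and> Y \<in> insert (Tp 1) {Y} \<union> S) \<or> (k=t \<and> X \<in> insert (Tp 1) {Y} \<union> S)"
      by blast
    show False
    proof (cases "k = 1")
      case True
      then show ?thesis using k c0 by auto
    next
      case False
      then have "2 \<le> k" "k \<le> t" using k by auto
      then show ?thesis using k ck[of k] XS False by auto
    qed
  qed
  show ?thesis
    apply (rule waiter_wins.offer_one[of "Tp 1"])
     apply (simp add: DD_verts_def) using t apply simp
    using \<open>waiter_wins (DD_edge t) (insert (Tp 1) {Y}) (pset ps)\<close> pe by simp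
qed


lemma case2:
  assumes t: "2 \<le> t"
  shows "waiter_wins (DD_edge t) {X} (DD_verts t - {X, Y})"
proof -
  define ps where "ps = (Ch (t-1), Ch t) # map (\<lambda>i. (Tp i, Ch ((\<lambda>i. i - 1) i))) [1..<t]"
  have inj: "inj_on (\<lambda>i::nat. i - 1) (set [1..<t])" by (auto simp: inj_on_def)
  have pd: "pdist ps" unfolding ps_def using pdist_map[OF _ inj] t
    by (auto simp: pset_map)
  have pe: "pset ps = DD_verts t - {X, Y} - {Tp t}"
  proof -
    have a: "DD_verts t - {X,Y} - {Tp t} = Ch ` {0..t} \<union> Tp ` {1..t} - {Tp t}" by (auto simp: DD_verts_def)
    have b: "Ch ` {0..t} \<union> Tp ` {1..t} - {Tp t} = {Ch (t-1), Ch t} \<union> (Tp ` {1..<t} \<union> (\<lambda>i. Ch (i - 1)) ` {1..<t})"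
    proof -
      have b1: "Ch ` {0..t} = {Ch (t-1), Ch t} \<union> (\<lambda>i. Ch (i - 1)) ` {1..<t}"
      proof (intro equalityI subsetI)
        fix x assume "x \<in> Ch ` {0..t}"
        then obtain j where j: "x = Ch j" "j \<le> t" by auto
        show "x \<in> {Ch (t-1), Ch t} \<union> (\<lambda>i. Ch (i - 1)) ` {1..<t}"
        proof (cases "j + 1 < t")
          case True
          then have "x = (\<lambda>i. Ch (i - 1)) (j+1)" "j + 1 \<in> {1..<t}" using j by auto
          then show ?thesis by blast
        next
          case False
          then have "j = t - 1 \<or> j = t" using j by linarith
          then show ?thesis using j by auto
        qed
      next
        fix x assume "x \<in> {Ch (t-1), Ch t} \<union> (\<lambda>i. Ch (i - 1)) ` {1..<t}"
        then show "x \<in> Ch ` {0..t}" by auto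
      qed
      have b2: "Tp ` {1..t} - {Tp t} = Tp ` {1..<t}" by auto
      have b3: "Ch ` {0..t} \<union> Tp ` {1..t} - {Tp t} = Ch ` {0..t} \<union> (Tp ` {1..t} - {Tp t})" by auto
      show ?thesis unfolding b3 b2 b1 by auto
    qed
    show ?thesis unfolding a b ps_def by (auto simp: pset_map)
  qed
  have "waiter_wins (DD_edge t) (insert (Tp t) {X}) (pset ps)"
  proof (rule pair_strategy[OF pd], intro allI impI notI)
    fix S assume S: "S \<subseteq> pset ps \<and> (\<forall>(a,b)\<in>set ps. a\<in>S \<longleftrightarrow> b\<notin>S)"
      and h: "has_triangle (DD_edge t) (insert (Tp t) {X} \<union> S)"
    have YS: "Y \<notin> S" using S pe by auto
    have c0: "Ch (t-1) \<in> S \<longleftrightarrow> Ch t \<notin> S" using S unfolding ps_def by auto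
    have ck: "\<And>k. 1 \<le> k \<Longrightarrow> k < t \<Longrightarrow> Tp k \<in> S \<longleftrightarrow> Ch (k-1) \<notin> S"
    proof -
      fix k assume "1 \<le> k" "k < t"
      then have "(Tp k, Ch (k-1)) \<in> set ps" unfolding ps_def by auto
      then show "Tp k \<in> S \<longleftrightarrow> Ch (k-1) \<notin> S" using S by auto
    qed
    from tri[OF h t] obtain k where k: "k\<in>{1..t}" "Ch (k-1) \<in> insert (Tp t) {X} \<union> S"
      "Ch k \<in> insert (Tp t) {X} \<union> S"
      "Tp k \<in> insert (Tp t) {X} \<union> S \<or> (k=1 \<and> Y \<in> insert (Tp t) {X} \<union> S) \<or> (k=t \<and> X \<in> insert (Tp t) {X} \<union> S)"
      by blast
    show False
    proof (cases "k = t")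
      case True
      then show ?thesis using k c0 by auto
    next
      case False
      then have "1 \<le> k" "k < t" using k by auto
      then show ?thesis using k ck[of k] YS False by auto
    qed
  qed
  show ?thesis
    apply (rule waiter_wins.offer_one[of "Tp t"])
     apply (simp add: DD_verts_def) using t apply simp
    using \<open>waiter_wins (DD_edge t) (insert (Tp t) {X}) (pset ps)\<close> pe by simp
qed

theorem mainTheorem16:
  fixes t :: nat
  assumes "t \<ge> 2"
  shows "waiter_wins_game (DD_verts t) (DD_edge t)"
  unfolding waiter_wins_game_def
  apply (rule waiter_wins.offer_two[of X _ Y])
  using case1[OF assms] case2[OF assms] by (auto simp: DD_verts_def)

end
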